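(* Index $\mathbb{R}^{2^L}$ by leaves $j \in \{0,\dots,2^L-1\}$ of a complete binary tree of depth $L$ in which each node at depth $k$ corresponds to a dyadic block $\{a,\dots,a+2^{L-k}-1\}$ of consecutive indices whose two children are its two halves, and let $W_L$ act by the induced permutation representation. The matched unitary of this representation is the Haar wavelet basis matrix, with columns ordered by scale: the scaling function $\phi(j) = 2^{-L/2}$, then for $s = 1,\dots,L$ the mother wavelets $\psi_{s,0},\dots,\psi_{s,2^{s-1}-1}$, where for $p \in \{0,\dots,2^{s-1}-1\}$, $a = p\,2^{L-s+1}$, $h = 2^{L-s}$, $\psi_{s,p}(j) = 2^{(s-L-1)/2}$ if $a \le j < a+h$, $-2^{(s-L-1)/2}$ if $a+h \le j < a+2h$, and $0$ otherwise. For every $W_L$-invariant covariance $\mathbf{R}$ on $\mathbb{R}^{2^L}$ the Haar wavelet transform diagonalizes $\mathbf{R}$, and the eigenvalue on the scale-$s$ subspace $\mathrm{span}\{\psi_{s,p}\}_p$ is $2^{s-1}$-fold degenerate.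
   Context: $W_L = \mathbb{Z}_2 \wr \cdots \wr \mathbb{Z}_2$ ($L$ levels), defined by $W_1 = \mathbb{Z}_2$, $W_d = W_{d-1}^2 \rtimes \mathbb{Z}_2$, acts on the leaves by tree-automorphisms: at each internal node a $\mathbb{Z}_2$ factor swaps the two child subtrees, independently across non-overlapping subtrees. A covariance (real symmetric positive semidefinite matrix) $\mathbf{R}$ is $W_L$-invariant if $\mathbf{P}_g \mathbf{R} \mathbf{P}_g^{-1} = \mathbf{R}$ for every permutation matrix $\mathbf{P}_g$, $g \in W_L$. The matched unitary is an orthogonal basis diagonalizing every such invariant covariance. *)

theory Defs
  imports "HOL-Analysis.Analysis" "HOL-Library.Log_Nat"
begin

text \<open>A node at depth k < L with block index b is the dyadic block
  {b*2^(L-k) ..< (b+1)*2^(L-k)}; its two children are the two halves.\<close>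

definition node_swap :: "nat \<Rightarrow> nat \<Rightarrow> nat \<Rightarrow> nat \<Rightarrow> nat" where
  "node_swap L k b j =
     (let a = b * 2^(L-k); h = 2^(L-k-1) in
      if a \<le> j \<and> j < a + h then j + h
      else if a + h \<le> j \<and> j < a + 2*h then j - h
      else j)"

text \<open>The iterated wreath product W_L as the permutation group of the leaves
  generated by all node swaps (internal nodes: depth k < L, block b < 2^k).\<close>

inductive_set wreath_group :: "nat \<Rightarrow> (nat \<Rightarrow> nat) set" for L where
  id: "id \<in> wreath_group L"
| swap: "\<lbrakk>g \<in> wreath_group L; k < L; b < 2^k\<rbrakk> \<Longrightarrow> node_swap L k b \<circ> g \<in> wreath_group L"

definition covariance :: "nat \<Rightarrow> (nat \<Rightarrow> nat \<Rightarrow> real) \<Rightarrow> bool" where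
  "covariance L R \<longleftrightarrow>
     (\<forall>i<2^L. \<forall>j<2^L. R i j = R j i) \<and>
     (\<forall>x :: nat \<Rightarrow> real. (\<Sum>i<2^L. \<Sum>j<2^L. x i * R i j * x j) \<ge> 0)"

text \<open>P_g R P_g^{-1} = R with (P_g)_{ij} = [i = g j] means R (g^{-1} i) (g^{-1} j) = R i j;
  as W_L is a group this is the same as R (g i) (g j) = R i j for all g.\<close>

definition invariant_cov :: "nat \<Rightarrow> (nat \<Rightarrow> nat \<Rightarrow> real) \<Rightarrow> bool" where
  "invariant_cov L R \<longleftrightarrow> covariance L R \<and>
     (\<forall>g \<in> wreath_group L. \<forall>i<2^L. \<forall>j<2^L. R (g i) (g j) = R i j)"

definition haar_phi :: "nat \<Rightarrow> nat \<Rightarrow> real" where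
  "haar_phi L j = 2 powr (- real L / 2)"

definition haar_psi :: "nat \<Rightarrow> nat \<Rightarrow> nat \<Rightarrow> nat \<Rightarrow> real" where
  "haar_psi L s p j =
     (let a = p * 2^(L-s+1); h = 2^(L-s); c = 2 powr ((real s - real L - 1) / 2) in
      if a \<le> j \<and> j < a + h then c
      else if a + h \<le> j \<and> j < a + 2*h then - c
      else 0)"

text \<open>Column c of the Haar matrix (scale ordering): c = 0 is the scaling function;
  c = 2^(s-1) + p with 1 \<le> s \<le> L, p < 2^(s-1) is psi_{s,p}; note floorlog 2 c = s.\<close>

definition haar_col :: "nat \<Rightarrow> nat \<Rightarrow> nat \<Rightarrow> real" where
  "haar_col L c j =
     (if c = 0 then haar_phi L j
      else haar_psi L (floorlog 2 c) (c - 2^(floorlog 2 c - 1)) j)"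

definition haar_scale :: "nat \<Rightarrow> nat" where
  "haar_scale c = (if c = 0 then 0 else floorlog 2 c)"

end

theory Submission
  imports Defs
begin
unbundle bit_operations_syntax
lemma xor_div: "((j::nat) XOR t) div 2^n = (j div 2^n) XOR (t div 2^n)"
  using drop_bit_xor[of n j t] by (simp add: drop_bit_eq_div)
lemma xor_lt: "(j::nat) < 2^L \<Longrightarrow> t < 2^L \<Longrightarrow> j XOR t < 2^L"
proof -
  assume a: "j < 2^L" "t < 2^L"
  have "(j XOR t) div 2^L = 0" using a by (simp add: xor_div)
  then show ?thesis by (simp add: div_eq_0_iff)
qed
lemma xor_pow_even: "even ((x::nat) div 2^n) \<Longrightarrow> x XOR 2^n = x + 2^n"
proof -
  assume "even (x div 2^n)"
  then have "\<not> bit x n" by (simp add: bit_iff_odd)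
  then have "x AND 2^n = 0" by (simp add: and_exp_eq_0_iff_not_bit)
  then show ?thesis by (simp add: disjunctive_add_eq_xor)
qed
lemma xor_pow_odd: "odd ((x::nat) div 2^n) \<Longrightarrow> x XOR 2^n = x - 2^n"
proof -
  assume o: "odd (x div 2^n)"
  then have ge: "x \<ge> 2^n" by (cases "x < 2^n") auto
  have "x = (x - 2^n) + 2^n" using ge by simp
  then have "x div 2^n = (x - 2^n) div 2^n + 1"
    by (metis div_add_self2 power_not_zero zero_neq_numeral)
  then have "even ((x - 2^n) div 2^n)" using o by simp
  then have "(x - 2^n) XOR 2^n = x" using ge xor_pow_even by simp
  then have "x XOR 2^n = ((x - 2^n) XOR 2^n) XOR 2^n" by simp
  then show ?thesis by (simp add: xor.assoc)
qed
lemma xor_odd: "odd ((x::nat) XOR q) \<longleftrightarrow> odd x \<noteq> odd q"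
  using xor_nat_rec[of x q] by auto
lemma div_eq_iff_nat: "0 < (m::nat) \<Longrightarrow> (j div m = q) = (q*m \<le> j \<and> j < q*m + m)"
  by (metis add.commute div_nat_eqI div_times_less_eq_dividend dividend_less_times_div mult.commute mult_Suc_right)

lemma node_swap_xor:
  assumes "k < L"
  shows "node_swap L k b j = (if j div 2^(L-k) = b then j XOR 2^(L-k-1) else j)"
proof -
  define n where "n = L - k - 1"
  have Lk: "L - k = Suc n" using assms n_def by simp
  have H: "(2::nat)^(L-k) = 2^n * 2" using Lk by simp
  have D: "j div 2^(L-k) = j div 2^n div 2" using H by (simp add: div_mult2_eq)
  have ns: "node_swap L k b j = (if b*(2^n*2) \<le> j \<and> j < b*(2^n*2) + 2^n then j + 2^n
      else if b*(2^n*2) + 2^n \<le> j \<and> j < b*(2^n*2) + 2*2^n then j - 2^n else j)"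
    unfolding node_swap_def Let_def using H n_def by simp
  have c1: "(b*(2^n*2) \<le> j \<and> j < b*(2^n*2) + 2^n) = (j div 2^n = 2*b)"
    using div_eq_iff_nat[of "2^n" j "2*b"] by (simp add: ac_simps)
  have c2: "(b*(2^n*2) + 2^n \<le> j \<and> j < b*(2^n*2) + 2*2^n) = (j div 2^n = 2*b+1)"
    using div_eq_iff_nat[of "2^n" j "2*b+1"] by (simp add: algebra_simps)
  have c3: "(j div 2^n div 2 = b) = (j div 2^n = 2*b \<or> j div 2^n = 2*b+1)"
    using div_eq_iff_nat[of 2 "j div 2^n" b] by auto
  show ?thesis
    unfolding ns c1 c2 D c3 n_def[symmetric]
    using xor_pow_even[of j n] xor_pow_odd[of j n] by auto
qed

lemma W_comp: "g \<in> wreath_group L \<Longrightarrow> h \<in> wreath_group L \<Longrightarrow> g \<circ> h \<in> wreath_group L"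
proof (induction g rule: wreath_group.induct)
  case id
  then show ?case by simp
next
  case (swap g k b)
  have gh: "g \<circ> h \<in> wreath_group L" by (rule swap.IH[OF swap.prems])
  have "node_swap L k b \<circ> (g \<circ> h) \<in> wreath_group L" by (rule wreath_group.swap[OF gh swap.hyps(2,3)])
  then show ?case by (metis comp_assoc)
qed

lemma W_level:
  assumes "k < L"
  shows "n \<le> 2^k \<Longrightarrow> \<exists>g\<in>wreath_group L. \<forall>j. g j = (if j div 2^(L-k) < n then j XOR 2^(L-k-1) else j)"
proof (induction n)
  case 0
  then show ?case by (intro bexI[of _ id] wreath_group.id) auto
next
  case (Suc n)
  then obtain g where g: "g \<in> wreath_group L" "\<forall>j. g j = (if j div 2^(L-k) < n then j XOR 2^(L-k-1) else j)"
    by auto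
  have "node_swap L k n \<circ> g \<in> wreath_group L" using g Suc assms by (intro wreath_group.swap) auto
  moreover have "(node_swap L k n \<circ> g) j = (if j div 2^(L-k) < Suc n then j XOR 2^(L-k-1) else j)" for j
  proof -
    have hd: "(2::nat)^(L - Suc k) div 2^(L-k) = 0" using assms by simp
    have "(j XOR 2^(L-k-1)) div 2^(L-k) = j div 2^(L-k)"
      by (simp add: xor_div hd)
    then show ?thesis using g(2) node_swap_xor[OF assms] by auto
  qed
  ultimately show ?case by blast
qed

lemma W_bit:
  assumes "m < L"
  shows "\<exists>g\<in>wreath_group L. \<forall>j<2^L. g j = j XOR 2^m"
proof -
  define k where "k = L - 1 - m"
  have k: "k < L" "L - k - 1 = m" using assms k_def by auto
  obtain g where g: "g \<in> wreath_group L" "\<forall>j. g j = (if j div 2^(L-k) < 2^k then j XOR 2^(L-k-1) else j)"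
    using W_level[OF k(1), of "2^k"] by auto
  have "j div 2^(L-k) < 2^k" if "j < 2^L" for j :: nat
  proof -
    have "(2::nat)^L = 2^k * 2^(L-k)" using k by (simp flip: power_add)
    then show ?thesis using that by (simp add: div_less_iff_less_mult)
  qed
  then show ?thesis using g k by (intro bexI[of _ g]) auto
qed

lemma W_xor:
  "m \<le> L \<Longrightarrow> t < 2^m \<Longrightarrow> \<exists>g\<in>wreath_group L. \<forall>j<2^L. g j = j XOR t"
proof (induction m arbitrary: t)
  case 0
  then show ?case by (intro bexI[of _ id] wreath_group.id) auto
next
  case (Suc m)
  define t' where "t' = take_bit m t"
  have tt: "t = 2^m * of_bool (bit t m) + t'"
    using take_bit_Suc_from_most[of m t] Suc.prems t'_def by (simp add: take_bit_nat_eq_self)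
  have t'lt: "t' < 2^m" unfolding t'_def by simp
  obtain g where g: "g \<in> wreath_group L" "\<forall>j<2^L. g j = j XOR t'"
    using Suc.IH[of t'] Suc.prems t'lt by auto
  show ?case
  proof (cases "bit t m")
    case False
    then show ?thesis using tt g by auto
  next
    case True
    obtain g2 where g2: "g2 \<in> wreath_group L" "\<forall>j<2^L. g2 j = j XOR 2^m"
      using W_bit[of m L] Suc.prems by auto
    have "t' AND 2^m = 0" unfolding t'_def by (simp add: and_exp_eq_0_iff_not_bit bit_take_bit_iff)
    then have tx: "t = t' XOR 2^m" using tt True by (simp add: disjunctive_add_eq_xor add.commute)
    have "t' < 2^L" using t'lt Suc.prems
      by (meson le_less_trans less_imp_le_nat one_less_numeral_iff power_strict_increasing_iff semiring_norm(76) Suc_le_lessD)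
    then have "\<forall>j<2^L. (g2 \<circ> g) j = j XOR t"
      using g g2 xor_lt tx by (simp add: xor.assoc)
    then show ?thesis using W_comp[OF g2(1) g(1)] by blast
  qed
qed

definition sg :: "nat \<Rightarrow> nat \<Rightarrow> real" where
  "sg q p = (if q = 2*p then 1 else if q = 2*p+1 then -1 else 0)"

lemma sum_div_group:
  assumes "0 < (h::nat)"
  shows "(\<Sum>j<m*h. F (j div h)) = real h * (\<Sum>q<m. F q :: real)"
proof -
  have "(\<Sum>j<m*h. F (j div h)) = (\<Sum>q<m. \<Sum>j\<in>{q*h..<q*h+h}. F (j div h))"
    by (rule sum.nat_group[symmetric])
  also have "\<dots> = (\<Sum>q<m. real h * F q)"
  proof (rule sum.cong[OF refl])
    fix q assume "q \<in> {..<m}"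
    have "\<forall>j\<in>{q*h..<q*h+h}. j div h = q" using div_eq_iff_nat[OF assms] by auto
    then have "(\<Sum>j\<in>{q*h..<q*h+h}. F (j div h)) = (\<Sum>j\<in>{q*h..<q*h+h}. F q)" by simp
    then show "(\<Sum>j\<in>{q*h..<q*h+h}. F (j div h)) = real h * F q" by simp
  qed
  finally show ?thesis by (simp add: sum_distrib_left)
qed

lemma sum_sg:
  assumes "2*p+1 < N"
  shows "(\<Sum>q<N. G q * sg q p) = G (2*p) - G (2*p+1)"
proof -
  have "(\<Sum>q<N. G q * sg q p) = (\<Sum>q<N. (if q = 2*p then G q else 0) - (if q = 2*p+1 then G q else 0))"
    by (rule sum.cong) (auto simp: sg_def)
  also have "\<dots> = G (2*p) - G (2*p+1)" using assms by (simp add: sum_subtractf)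
  finally show ?thesis .
qed

lemma haar_psi_sg:
  assumes "1 \<le> s" "s \<le> L"
  shows "haar_psi L s p j = 2 powr ((real s - real L - 1) / 2) * sg (j div 2^(L-s)) p"
proof -
  have e: "(2::nat)^(L-s+1) = 2^(L-s)*2" by simp
  have c1: "(p*(2^(L-s)*2) \<le> j \<and> j < p*(2^(L-s)*2) + 2^(L-s)) = (j div 2^(L-s) = 2*p)"
    using div_eq_iff_nat[of "2^(L-s)" j "2*p"] by (simp add: ac_simps)
  have c2: "(p*(2^(L-s)*2) + 2^(L-s) \<le> j \<and> j < p*(2^(L-s)*2) + 2*2^(L-s)) = (j div 2^(L-s) = 2*p+1)"
    using div_eq_iff_nat[of "2^(L-s)" j "2*p+1"] by (simp add: algebra_simps)
  show ?thesis unfolding haar_psi_def Let_def e c1 c2 sg_def by simp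
qed

lemma div_odd_pow: "1 \<le> d \<Longrightarrow> (2*x+1::nat) div 2^d = (2*x) div 2^d"
proof -
  assume "1 \<le> d"
  then have "(2::nat)^d = 2 * 2^(d-1)" by (metis Suc_diff_le diff_Suc_1 power_Suc)
  then show ?thesis by (simp add: div_mult2_eq)
qed

lemma psi_inner_le:
  assumes "1 \<le> s" "s \<le> s'" "s' \<le> L" "p < 2^(s-1)" "p' < 2^(s'-1)"
  shows "(\<Sum>j<2^L. haar_psi L s p j * haar_psi L s' p' j) = (if s = s' \<and> p = p' then 1 else 0)"
proof -
  define h' :: nat where "h' = 2^(L-s')"
  define d where "d = s' - s"
  define C where "C = 2 powr ((real s - real L - 1) / 2) * 2 powr ((real s' - real L - 1) / 2)"
  have hh: "(2::nat)^(L-s) = h' * 2^d" unfolding h'_def d_def using assms by (simp flip: power_add)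
  have N: "(2::nat)^L = 2^s' * h'" unfolding h'_def using assms by (simp flip: power_add)
  have "(\<Sum>j<2^L. haar_psi L s p j * haar_psi L s' p' j)
      = (\<Sum>j<2^s' * h'. (\<lambda>q. C * sg (q div 2^d) p * sg q p') (j div h'))"
    unfolding N
    by (rule sum.cong[OF refl]) (use assms in \<open>simp add: haar_psi_sg hh h'_def C_def div_mult2_eq\<close>)
  also have "\<dots> = real h' * (\<Sum>q<2^s'. C * sg (q div 2^d) p * sg q p')"
    by (rule sum_div_group) (simp add: h'_def)
  also have "(\<Sum>q<2^s'. C * sg (q div 2^d) p * sg q p') =
      C * sg ((2*p') div 2^d) p - C * sg ((2*p'+1) div 2^d) p"
  proof -
    have "(2::nat)^s' = 2*2^(s'-1)" using assms by (metis Suc_diff_le diff_Suc_1 power_Suc le_trans)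
    then have "2*p'+1 < (2::nat)^s'" using assms by linarith
    from sum_sg[OF this, of "\<lambda>q. C * sg (q div 2^d) p"] show ?thesis by simp
  qed
  finally have S: "(\<Sum>j<2^L. haar_psi L s p j * haar_psi L s' p' j) =
      real h' * (C * sg ((2*p') div 2^d) p - C * sg ((2*p'+1) div 2^d) p)" .
  show ?thesis
  proof (cases "d = 0")
    case False
    then show ?thesis using S div_odd_pow[of d p'] d_def by auto
  next
    case True
    then have ss: "s = s'" using assms d_def by simp
    show ?thesis
    proof (cases "p = p'")
      case False
      then show ?thesis using S True by (simp add: sg_def)
    next
      case pp: True
      have "real h' * C * 2 = 1"
      proof -
        have "real h' = 2 powr (real L - real s)" unfolding h'_def using assms ss
          by (simp add: powr_realpow[symmetric] of_nat_diff)
        then have "real h' * C * 2 = 2 powr ((real L - real s) + (real s - real L - 1) + 1)"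
          unfolding C_def ss by (simp add: powr_add[symmetric])
        then show ?thesis by simp
      qed
      then show ?thesis using S True ss pp by (simp add: sg_def algebra_simps)
    qed
  qed
qed

lemma col_params:
  assumes "0 < c" "c < 2^L"
  shows "1 \<le> floorlog 2 c \<and> floorlog 2 c \<le> L \<and> c - 2^(floorlog 2 c - 1) < 2^(floorlog 2 c - 1)
         \<and> 2^(floorlog 2 c - 1) \<le> c"
proof -
  define s where "s = floorlog 2 c"
  have b: "2^(s-1) \<le> c" "c < 2^s" using floorlog_bounds[of c 2] assms s_def by auto
  have s1: "1 \<le> s" using b assms by (cases s) auto
  have "2^(s-1) < (2::nat)^L" using b assms by linarith
  then have "s - 1 < L" by (simp add: power_strict_increasing_iff)
  then have sL: "s \<le> L" by linarith
  have "(2::nat)^s = 2*2^(s-1)" using s1 by (metis Suc_diff_le diff_Suc_1 power_Suc)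
  then show ?thesis using b s1 sL s_def by auto
qed

lemma haar_col_psi: "0 < c \<Longrightarrow> haar_col L c j = haar_psi L (floorlog 2 c) (c - 2^(floorlog 2 c - 1)) j"
  by (simp add: haar_col_def)

lemma psi_sum0:
  assumes "1 \<le> s" "s \<le> L" "p < 2^(s-1)"
  shows "(\<Sum>j<2^L. haar_psi L s p j) = 0"
proof -
  define h :: nat where "h = 2^(L-s)"
  define C where "C = 2 powr ((real s - real L - 1) / 2)"
  have N: "(2::nat)^L = 2^s * h" unfolding h_def using assms by (simp flip: power_add)
  have "(\<Sum>j<2^L. haar_psi L s p j) = (\<Sum>j<2^s * h. (\<lambda>q. C * sg q p) (j div h))"
    unfolding N by (rule sum.cong[OF refl]) (use assms in \<open>simp add: haar_psi_sg h_def C_def\<close>)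
  also have "\<dots> = real h * (\<Sum>q<2^s. C * sg q p)"
    by (rule sum_div_group) (simp add: h_def)
  also have "(\<Sum>q<2^s. C * sg q p) = 0"
  proof -
    have "(2::nat)^s = 2*2^(s-1)" using assms by (metis Suc_diff_le diff_Suc_1 power_Suc)
    then have "2*p+1 < (2::nat)^s" using assms by linarith
    from sum_sg[OF this, of "\<lambda>q. C"] show ?thesis by simp
  qed
  finally show ?thesis by simp
qed

lemma orthonormal:
  assumes "c < 2^L" "c' < 2^L"
  shows "(\<Sum>j<2^L. haar_col L c j * haar_col L c' j) = (if c = c' then 1 else 0)"
proof -
  have phi_psi: "(\<Sum>j<2^L. haar_col L 0 j * haar_col L d j) = 0" if "0 < d" "d < 2^L" for d
  proof -
    have "(\<Sum>j<2^L. haar_col L 0 j * haar_col L d j) = 2 powr (- real L / 2) *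
        (\<Sum>j<2^L. haar_psi L (floorlog 2 d) (d - 2^(floorlog 2 d - 1)) j)"
      using that by (simp add: haar_col_def haar_phi_def sum_distrib_left)
    also have "\<dots> = 0" using psi_sum0 col_params[OF that] by simp
    finally show ?thesis .
  qed
  show ?thesis
  proof (cases "c = 0")
    case c0: True
    show ?thesis
    proof (cases "c' = 0")
      case True
      have "(\<Sum>j<(2::nat)^L. haar_col L c j * haar_col L c' j) = 2^L * (2 powr (- real L / 2) * 2 powr (- real L / 2))"
        using c0 True by (simp add: haar_col_def haar_phi_def)
      also have "\<dots> = 2 powr (real L) * 2 powr (- real L)"
        by (simp add: powr_add[symmetric] powr_realpow)
      also have "\<dots> = 1" by (simp add: powr_add[symmetric])
      finally show ?thesis using c0 True by simp
    next
      case False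
      then show ?thesis using phi_psi[of c'] c0 assms by simp
    qed
  next
    case cn: False
    show ?thesis
    proof (cases "c' = 0")
      case True
      then show ?thesis using phi_psi[of c] cn assms by (simp add: mult.commute)
    next
      case False
      define s where "s = floorlog 2 c"
      define s' where "s' = floorlog 2 c'"
      define p where "p = c - 2^(s-1)"
      define p' where "p' = c' - 2^(s'-1)"
      have P: "1 \<le> s" "s \<le> L" "p < 2^(s-1)" "2^(s-1) \<le> c"
        using col_params[of c L] cn assms unfolding s_def p_def by auto
      have P': "1 \<le> s'" "s' \<le> L" "p' < 2^(s'-1)" "2^(s'-1) \<le> c'"
        using col_params[of c' L] False assms unfolding s'_def p'_def by auto
      have eq: "(s = s' \<and> p = p') = (c = c')"
        using P P' unfolding p_def p'_def s_def s'_def by auto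
      have cc: "haar_col L c j * haar_col L c' j = haar_psi L s p j * haar_psi L s' p' j" for j
        using cn False by (simp add: haar_col_psi s_def s'_def p_def p'_def)
      show ?thesis
      proof (cases "s \<le> s'")
        case True
        then show ?thesis unfolding cc using psi_inner_le[of s s' L p p'] P P' eq by simp
      next
        case False
        then have "s' \<le> s" by simp
        then show ?thesis unfolding cc using psi_inner_le[of s' s L p' p] P P' eq
          by (simp add: mult.commute eq_commute)
      qed
    qed
  qed
qed

lemma inv_xor:
  assumes "invariant_cov L R" "t < 2^L" "i < 2^L" "j < 2^L"
  shows "R (i XOR t) (j XOR t) = R i j"
proof -
  obtain g where g: "g \<in> wreath_group L" "\<forall>j<2^L. g j = j XOR t"
    using W_xor[of L L t] assms by auto
  then show ?thesis using assms unfolding invariant_cov_def by metis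
qed

lemma inv_swap:
  assumes "invariant_cov L R" "k < L" "b < 2^k" "i < 2^L" "j < 2^L"
  shows "R (node_swap L k b i) (node_swap L k b j) = R i j"
proof -
  have "node_swap L k b \<circ> id \<in> wreath_group L"
    using assms by (intro wreath_group.swap wreath_group.id)
  then have "node_swap L k b \<in> wreath_group L" by simp
  then show ?thesis using assms unfolding invariant_cov_def by blast
qed

lemma sum_xor_reindex:
  assumes "(t::nat) < 2^L"
  shows "(\<Sum>j<2^L. F (j XOR t)) = (\<Sum>j<(2::nat)^L. (F j :: real))"
  by (rule sum.reindex_bij_witness[of _ "\<lambda>j. j XOR t" "\<lambda>j. j XOR t"])
     (auto simp: xor.assoc xor_lt assms)

lemma node_swap_props:
  assumes "k < L" "j < 2^L"
  shows "node_swap L k b j < 2^L \<and> node_swap L k b (node_swap L k b j) = j"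
proof -
  have hd: "(2::nat)^(L - Suc k) div 2^(L-k) = 0" using assms by simp
  have dd: "(j XOR 2^(L - Suc k)) div 2^(L-k) = j div 2^(L-k)"
    by (simp add: xor_div hd)
  have lt: "(2::nat)^(L - Suc k) < 2^L" using assms by (simp add: power_strict_increasing_iff)
  show ?thesis using node_swap_xor[OF assms(1), of b] dd xor_lt[OF assms(2) lt] assms
    by (auto simp: xor.assoc)
qed

lemma sum_swap_reindex:
  assumes "k < L"
  shows "(\<Sum>j<2^L. F (node_swap L k b j)) = (\<Sum>j<(2::nat)^L. (F j :: real))"
  by (rule sum.reindex_bij_witness[of _ "node_swap L k b" "node_swap L k b"])
     (use node_swap_props[OF assms] in auto)

lemma eig_phi:
  assumes "invariant_cov L R" "i < 2^L"
  shows "(\<Sum>j<2^L. R i j) = (\<Sum>j<2^L. R 0 j)"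
proof -
  have "(\<Sum>j<2^L. R i j) = (\<Sum>j<2^L. R i (j XOR i))"
    using sum_xor_reindex[OF assms(2), of "\<lambda>j. R i j"] by simp
  also have "\<dots> = (\<Sum>j<2^L. R (0 XOR i) (j XOR i))" by simp
  also have "\<dots> = (\<Sum>j<2^L. R 0 j)"
    by (rule sum.cong[OF refl]) (use inv_xor[OF assms(1) assms(2), of 0] in simp)
  finally show ?thesis .
qed

lemma sg_alt: "sg y p = (if y div 2 = p then (if even y then 1 else -1) else 0)"
  unfolding sg_def by (auto; presburger)

lemma xor_eq_self: "((a::nat) XOR p = p) = (a = 0)"
proof
  assume "a XOR p = p"
  then have "(a XOR p) XOR p = p XOR p" by simp
  then show "a = 0" by (simp add: xor.assoc)
qed simp

lemma sg_xor:
  assumes "q div 2 = p"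
  shows "sg (x XOR q) p = sg x 0 * sg q p"
proof -
  have d: "(x XOR q) div 2 = (x div 2) XOR p" using xor_div[of x q 1] assms by simp
  show ?thesis unfolding sg_alt d xor_eq_self using xor_odd[of x q] assms by auto
qed

lemma eig_psi:
  assumes "invariant_cov L R" "1 \<le> s" "s \<le> L" "p < 2^(s-1)" "i < 2^L"
  shows "(\<Sum>j<2^L. R i j * sg (j div 2^(L-s)) p)
       = (\<Sum>j<2^L. R 0 j * sg (j div 2^(L-s)) 0) * sg (i div 2^(L-s)) p"
proof (cases "i div 2^(L-s) div 2 = p")
  case True
  define h :: nat where "h = 2^(L-s)"
  have "(\<Sum>j<2^L. R i j * sg (j div h) p) = (\<Sum>j<2^L. R i (j XOR i) * sg ((j XOR i) div h) p)"
    using sum_xor_reindex[OF assms(5), of "\<lambda>j. R i j * sg (j div h) p"] by simp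
  also have "\<dots> = (\<Sum>j<2^L. R 0 j * (sg (j div h) 0 * sg (i div h) p))"
  proof (rule sum.cong[OF refl])
    fix j assume "j \<in> {..<(2::nat)^L}"
    then have "R (0 XOR i) (j XOR i) = R 0 j" using inv_xor[OF assms(1) assms(5), of 0 j] by simp
    moreover have "sg ((j XOR i) div h) p = sg (j div h) 0 * sg (i div h) p"
      unfolding h_def xor_div using sg_xor True by simp
    ultimately show "R i (j XOR i) * sg ((j XOR i) div h) p = R 0 j * (sg (j div h) 0 * sg (i div h) p)"
      by simp
  qed
  also have "\<dots> = (\<Sum>j<2^L. R 0 j * sg (j div h) 0) * sg (i div h) p"
    by (simp add: sum_distrib_right mult.assoc)
  finally show ?thesis unfolding h_def .
next
  case False
  define h :: nat where "h = 2^(L-s)"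
  define k where "k = s - 1"
  define g where "g = node_swap L k p"
  have k: "k < L" "p < 2^k" "L - k = Suc (L - s)" "L - k - 1 = L - s" using assms k_def by auto
  have H: "(2::nat)^(L-k) = h * 2" unfolding h_def using k by simp
  have gx: "g j = (if j div h div 2 = p then j XOR h else j)" for j
    unfolding g_def node_swap_xor[OF k(1)] H k(4) h_def by (simp add: div_mult2_eq)
  have gi: "g i = i" using gx False h_def by simp
  have si: "sg (i div h) p = 0" using False h_def by (auto simp: sg_alt)
  have sgg: "sg (g j div h) p = - sg (j div h) p" for j
  proof (cases "j div h div 2 = p")
    case T: True
    show ?thesis
    proof (cases "even (j div h)")
      case True
      then have "g j = j + h" using gx T xor_pow_even[of j "L-s"] h_def by simp
      then have "g j div h = j div h + 1" using h_def by simp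
      then show ?thesis using True T by (simp add: sg_alt)
    next
      case False
      then have "g j = j - h" using gx T xor_pow_odd[of j "L-s"] h_def by simp
      moreover have "j \<ge> h" using False by (cases "j < h") auto
      ultimately have "g j div h = j div h - 1" using h_def
        by (metis div_add_self2 le_add_diff_inverse2 add_diff_cancel_right' power_not_zero zero_neq_numeral)
      moreover have "j div h = 2*p+1" using False T by (metis odd_two_times_div_two_succ)
      ultimately show ?thesis by (simp add: sg_def)
    qed
  next
    case F: False
    then show ?thesis using gx by (simp add: sg_alt)
  qed
  define S where "S = (\<Sum>j<2^L. R i j * sg (j div h) p)"
  have "S = (\<Sum>j<2^L. R i (g j) * sg (g j div h) p)"
    unfolding S_def g_def using sum_swap_reindex[OF k(1), of "\<lambda>j. R i j * sg (j div h) p" p] by simp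
  also have "\<dots> = (\<Sum>j<2^L. - (R i j * sg (j div h) p))"
  proof (rule sum.cong[OF refl])
    fix j assume "j \<in> {..<(2::nat)^L}"
    then have "R (g i) (g j) = R i j" unfolding g_def using inv_swap[OF assms(1) k(1) k(2) assms(5)] by simp
    then show "R i (g j) * sg (g j div h) p = - (R i j * sg (j div h) p)" using gi sgg by simp
  qed
  also have "\<dots> = - S" unfolding S_def by (simp add: sum_negf)
  finally have "S = 0" by simp
  then show ?thesis using si unfolding S_def h_def by simp
qed

theorem mainTheorem11:
  fixes L :: nat
  shows "(\<forall>c<2^L. \<forall>c'<2^L.
            (\<Sum>j<2^L. haar_col L c j * haar_col L c' j) = (if c = c' then 1 else 0))
       \<and> (\<forall>R. invariant_cov L R \<longrightarrow>
            (\<exists>ev :: nat \<Rightarrow> real.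
               (\<forall>c<2^L. \<forall>i<2^L. (\<Sum>j<2^L. R i j * haar_col L c j) = ev c * haar_col L c i)
             \<and> (\<forall>c<2^L. \<forall>c'<2^L. haar_scale c = haar_scale c' \<longrightarrow> ev c = ev c')))"
proof (rule conjI)
  show "\<forall>c<2^L. \<forall>c'<2^L.
            (\<Sum>j<2^L. haar_col L c j * haar_col L c' j) = (if c = c' then 1 else 0)"
    using orthonormal by blast
next
  show "\<forall>R. invariant_cov L R \<longrightarrow>
            (\<exists>ev :: nat \<Rightarrow> real.
               (\<forall>c<2^L. \<forall>i<2^L. (\<Sum>j<2^L. R i j * haar_col L c j) = ev c * haar_col L c i)
             \<and> (\<forall>c<2^L. \<forall>c'<2^L. haar_scale c = haar_scale c' \<longrightarrow> ev c = ev c'))"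
  proof (intro allI impI)
  fix R assume R: "invariant_cov L R"
  define lam where "lam s = (if s = 0 then (\<Sum>j<2^L. R 0 j) else (\<Sum>j<2^L. R 0 j * sg (j div 2^(L-s)) 0))" for s
  define ev where "ev c = lam (haar_scale c)" for c
  have E: "(\<Sum>j<2^L. R i j * haar_col L c j) = ev c * haar_col L c i" if c: "c < 2^L" and i: "i < 2^L" for c i
  proof (cases "c = 0")
    case True
    have "(\<Sum>j<2^L. R i j * haar_col L c j) = (\<Sum>j<2^L. R i j) * 2 powr (- real L / 2)"
      using True by (simp add: haar_col_def haar_phi_def sum_distrib_right)
    then show ?thesis using True eig_phi[OF R i] by (simp add: ev_def lam_def haar_scale_def haar_col_def haar_phi_def)
  next
    case False
    define s where "s = floorlog 2 c"
    define p where "p = c - 2^(s-1)"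
    define C where "C = 2 powr ((real s - real L - 1) / 2)"
    have P: "1 \<le> s" "s \<le> L" "p < 2^(s-1)"
      using col_params[of c L] c False unfolding s_def p_def by auto
    have col: "haar_col L c j = C * sg (j div 2^(L-s)) p" for j
      using False P by (simp add: haar_col_psi haar_psi_sg s_def p_def C_def)
    have "(\<Sum>j<2^L. R i j * haar_col L c j) = C * (\<Sum>j<2^L. R i j * sg (j div 2^(L-s)) p)"
      unfolding col by (simp add: sum_distrib_left ac_simps)
    also have "\<dots> = C * ((\<Sum>j<2^L. R 0 j * sg (j div 2^(L-s)) 0) * sg (i div 2^(L-s)) p)"
      using eig_psi[OF R P i] by simp
    also have "\<dots> = ev c * haar_col L c i"
      unfolding col ev_def lam_def haar_scale_def using False P s_def by simp
    finally show ?thesis .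
  qed
  have S: "ev c = ev c'" if "haar_scale c = haar_scale c'" for c c'
    using that unfolding ev_def by simp
  show "\<exists>ev :: nat \<Rightarrow> real.
               (\<forall>c<2^L. \<forall>i<2^L. (\<Sum>j<2^L. R i j * haar_col L c j) = ev c * haar_col L c i)
             \<and> (\<forall>c<2^L. \<forall>c'<2^L. haar_scale c = haar_scale c' \<longrightarrow> ev c = ev c')"
    using E S by blast
  qed
qed
end
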